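(* Assume the $abc$-conjecture. Then there is an absolute constant $C>0$ such that for every real $x > C$ and every real $y$ with $1 \le y \le x^{0.2}$, there do not exist squarefull integers $n_1<n_2<n_3$ in the interval $(x, x+y]$ with $n_1+n_3 = 2n_2$ (i.e. the squarefull numbers in $(x,x+y]$ contain no non-trivial three-term arithmetic progression).
   Context: A positive integer $n$ is squarefull if every prime $p$ dividing $n$ satisfies $p^2\mid n$. For a nonzero integer $m$, $\kappa(m)=\prod_{p\mid m} p$. The $abc$-conjecture is the statement: for every $\epsilon>0$ there is a constant $C_\epsilon>0$ such that for all integers $a,b,c$ with $a+b=c$ and $\gcd(a,b)=1$, one has $\max\{|a|,|b|,|c|\} \le C_\epsilon\, \kappa(abc)^{1+\epsilon}$. *)

theory Defs
  imports "HOL-Computational_Algebra.Primes" Complex_Main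
begin

definition squarefull :: "nat \<Rightarrow> bool" where
  "squarefull n \<longleftrightarrow> n > 0 \<and> (\<forall>p. prime p \<and> p dvd n \<longrightarrow> p^2 dvd n)"

definition kappa :: "int \<Rightarrow> int" where
  "kappa m = (\<Prod>p\<in>prime_factors m. p)"

definition abc_conjecture :: bool where
  "abc_conjecture \<longleftrightarrow>
     (\<forall>\<epsilon>::real. \<epsilon> > 0 \<longrightarrow> (\<exists>C::real. C > 0 \<and>
        (\<forall>a b c :: int. a + b = c \<longrightarrow> gcd a b = 1 \<longrightarrow>
           real_of_int (max \<bar>a\<bar> (max \<bar>b\<bar> \<bar>c\<bar>)) \<le> C * (real_of_int (kappa (a*b*c))) powr (1 + \<epsilon>))))"

end

theory Submission
  imports Defs
begin

lemma kappa_ge1: "kappa m \<ge> 1"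
  unfolding kappa_def
  by (rule prod_ge_1) (auto dest: in_prime_factors_imp_prime simp: prime_gt_1_int less_imp_le)

lemma kappa_nonneg: "kappa m \<ge> 0"
  using kappa_ge1[of m] by simp

lemma prod_primes_pow_dvd:
  fixes m :: int
  assumes "finite S" "\<forall>p\<in>S. prime p \<and> p ^ k dvd m"
  shows "(\<Prod>p\<in>S. p ^ k) dvd m"
  using assms
proof (induction S rule: finite_induct)
  case empty then show ?case by simp
next
  case (insert p S)
  have cop: "coprime (p ^ k) (\<Prod>q\<in>S. q ^ k)"
  proof -
    have "\<forall>q\<in>S. coprime p q" using insert by (metis insert_iff primes_coprime)
    then have "coprime p (\<Prod>q\<in>S. q ^ k)"
      by (simp add: prod_coprime_right)
    then show ?thesis by simp
  qed
  show ?case using insert cop by (simp add: divides_mult)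
qed

lemma kappa_dvd: "m \<noteq> 0 \<Longrightarrow> kappa m dvd m"
  unfolding kappa_def
  using prod_primes_pow_dvd[of "prime_factors m" 1 m] by auto

lemma kappa_le_abs: "m \<noteq> 0 \<Longrightarrow> kappa m \<le> \<bar>m\<bar>"
proof -
  assume m: "m \<noteq> 0"
  have "\<bar>kappa m\<bar> \<le> \<bar>m\<bar>" using dvd_imp_le_int[OF m kappa_dvd[OF m]] .
  then show ?thesis by simp
qed

lemma pf_ge1: "p \<in> prime_factors (m::int) \<Longrightarrow> 1 \<le> p"
  using in_prime_factors_imp_prime prime_gt_1_int by fastforce

lemma kappa_mono: "b \<noteq> 0 \<Longrightarrow> a dvd b \<Longrightarrow> kappa a \<le> kappa b"
  unfolding kappa_def
proof (rule prod_mono2)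
  assume "b \<noteq> 0" "a dvd b"
  then show "prime_factors a \<subseteq> prime_factors b" by (rule dvd_prime_factors)
qed (auto dest: pf_ge1)

lemma kappa_mult: "a \<noteq> 0 \<Longrightarrow> b \<noteq> 0 \<Longrightarrow> kappa (a * b) \<le> kappa a * kappa b"
proof -
  assume a: "a \<noteq> 0" and b: "b \<noteq> 0"
  let ?U = "prime_factors a \<union> prime_factors b" and ?I = "prime_factors a \<inter> prime_factors b"
  have "kappa (a*b) = (\<Prod>p\<in>?U. p)"
    unfolding kappa_def using a b by (simp add: prime_factors_product)
  also have "\<dots> \<le> (\<Prod>p\<in>?U. p) * (\<Prod>p\<in>?I. p)"
  proof -
    have "1 \<le> (\<Prod>p\<in>?I. p)" by (rule prod_ge_1) (auto dest: pf_ge1)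
    moreover have "0 \<le> (\<Prod>p\<in>?U. p)" by (rule prod_nonneg) (auto dest: pf_ge1)
    ultimately show ?thesis by (simp add: mult_le_cancel_left1)
  qed
  also have "\<dots> = kappa a * kappa b"
    unfolding kappa_def by (rule prod.union_inter) auto
  finally show ?thesis .
qed

lemma kappa_sq_dvd:
  fixes m :: int
  assumes "m \<noteq> 0" "\<forall>p. prime p \<and> p dvd m \<longrightarrow> p^2 dvd m"
  shows "kappa m ^ 2 dvd m"
proof -
  have "(\<Prod>p\<in>prime_factors m. p ^ 2) dvd m"
    using assms by (intro prod_primes_pow_dvd) auto
  moreover have "kappa m ^ 2 = (\<Prod>p\<in>prime_factors m. p ^ 2)"
    unfolding kappa_def by (simp add: prod_power_distrib)
  ultimately show ?thesis by simp
qed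

lemma sf_int: "prime (p::int) \<Longrightarrow> p dvd int n \<Longrightarrow> (\<forall>q. prime q \<and> q dvd n \<longrightarrow> q^2 dvd n) \<Longrightarrow> p^2 dvd int n"
proof -
  assume p: "prime p" and d: "p dvd int n" and h: "\<forall>q. prime q \<and> q dvd n \<longrightarrow> q^2 dvd n"
  obtain q where q: "p = int q" using p prime_ge_0_int zero_le_imp_eq_int by blast
  have "prime q" using p q by simp
  moreover have "q dvd n" using d q by simp
  ultimately have "q^2 dvd n" using h by blast
  then show ?thesis using q by (metis of_nat_dvd_iff of_nat_power)
qed

lemma squarefull_kappa:
  assumes "squarefull n"
  shows "kappa (int n) ^ 2 \<le> int n"
proof -
  have n: "n > 0" and h: "\<forall>q. prime q \<and> q dvd n \<longrightarrow> q^2 dvd n"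
    using assms by (auto simp add: squarefull_def)
  have "\<forall>p. prime p \<and> p dvd int n \<longrightarrow> p^2 dvd int n"
    using sf_int h by blast
  then have "kappa (int n) ^ 2 dvd int n" using n by (intro kappa_sq_dvd) auto
  then show ?thesis using n by (intro zdvd_imp_le) auto
qed


lemma kappa_sq: "kappa (x * x) = kappa x"
proof (cases "x = 0")
  case True then show ?thesis by simp
next
  case False then show ?thesis unfolding kappa_def by (simp add: prime_factors_product)
qed

lemma ge1_mult: "(1::int) \<le> x \<Longrightarrow> 1 \<le> y \<Longrightarrow> 1 \<le> x*y"
  using mult_mono[of 1 x 1 y] by simp

lemma key:
  fixes N1 N2 N3 d :: int and K e :: real
  assumes abc: "\<forall>a b c :: int. a + b = c \<longrightarrow> gcd a b = 1 \<longrightarrow>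
           real_of_int (max \<bar>a\<bar> (max \<bar>b\<bar> \<bar>c\<bar>)) \<le> K * (real_of_int (kappa (a*b*c))) powr (1 + e)"
    and e: "e > 0" and K: "K > 0"
    and pos: "N1 > 0" "d > 0" "N2 = N1 + d" "N3 = N2 + d"
  shows "real_of_int (N2^2) \<le> K * real_of_int (kappa N1 * kappa N2 * kappa N3 * d^2) powr (1 + e)"
proof -
  define a where "a = N1 * N3"
  define b where "b = d^2"
  define c where "c = N2^2"
  have abc_eq: "a + b = c" unfolding a_def b_def c_def using pos by (simp add: power2_eq_square algebra_simps)
  have a0: "a > 0" unfolding a_def using pos by simp
  have b0: "b > 0" unfolding b_def using pos by simp
  define g where "g = gcd a b"
  have g0: "g > 0" unfolding g_def using a0 by simp
  define A where "A = a div g"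
  define B where "B = b div g"
  define Cc where "Cc = c div g"
  have aA: "a = g * A" unfolding A_def g_def by simp
  have bB: "b = g * B" unfolding B_def g_def by simp
  have cC: "c = g * Cc" and ABC: "A + B = Cc"
  proof -
    have "c = g * (A + B)" using aA bB abc_eq by (simp add: algebra_simps)
    then show "c = g * Cc" "A + B = Cc" unfolding Cc_def using g0 by auto
  qed
  have A0: "A > 0" using aA a0 g0 by (simp add: zero_less_mult_iff)
  have B0: "B > 0" using bB b0 g0 by (simp add: zero_less_mult_iff)
  have C0: "Cc > 0" using A0 B0 ABC by simp
  have cop: "gcd A B = 1"
  proof -
    have "coprime A B" unfolding A_def B_def g_def using a0 by (intro div_gcd_coprime) auto
    then show ?thesis by simp
  qed
  have main: "real_of_int (max \<bar>A\<bar> (max \<bar>B\<bar> \<bar>Cc\<bar>)) \<le> K * (real_of_int (kappa (A*B*Cc))) powr (1 + e)"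
    by (rule abc[rule_format, OF ABC cop])
  define P where "P = kappa N1 * kappa N2 * kappa N3"
  have P1: "P \<ge> 1" unfolding P_def using kappa_ge1 ge1_mult by metis
  have kABC: "kappa (A*B*Cc) \<le> P * B"
  proof -
    have "kappa (A*B*Cc) \<le> kappa (A*B) * kappa Cc" using A0 B0 C0 by (intro kappa_mult) auto
    also have "\<dots> \<le> (kappa A * kappa B) * kappa Cc"
      using A0 B0 kappa_mult[of A B] kappa_ge1[of Cc] by (intro mult_right_mono) auto
    also have "\<dots> \<le> (kappa N1 * kappa N3 * B) * kappa N2"
    proof (rule mult_mono)
      have "kappa A \<le> kappa a" using a0 aA by (intro kappa_mono) auto
      also have "\<dots> \<le> kappa N1 * kappa N3" unfolding a_def using pos by (intro kappa_mult) auto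
      finally have 1: "kappa A \<le> kappa N1 * kappa N3" .
      have 2: "kappa B \<le> B" using kappa_le_abs[of B] B0 by simp
      show "kappa A * kappa B \<le> kappa N1 * kappa N3 * B"
        using 1 2 kappa_ge1[of A] kappa_ge1[of B] by (intro mult_mono) auto
      have "kappa Cc \<le> kappa c" using cC C0 g0 by (intro kappa_mono) auto
      also have "\<dots> = kappa N2" unfolding c_def power2_eq_square by (rule kappa_sq)
      finally show "kappa Cc \<le> kappa N2" .
    qed (use kappa_nonneg B0 in \<open>auto intro!: mult_nonneg_nonneg\<close>)
    also have "\<dots> = P * B" unfolding P_def by (simp add: algebra_simps)
    finally show ?thesis .
  qed
  have "real_of_int Cc \<le> K * real_of_int (P * B) powr (1 + e)"
  proof -
    have "real_of_int Cc \<le> real_of_int (max \<bar>A\<bar> (max \<bar>B\<bar> \<bar>Cc\<bar>))" by simp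
    also have "\<dots> \<le> K * (real_of_int (kappa (A*B*Cc))) powr (1 + e)" by (rule main)
    also have "\<dots> \<le> K * real_of_int (P * B) powr (1 + e)"
    proof -
      have "real_of_int (kappa (A*B*Cc)) \<le> real_of_int (P * B)" using kABC by linarith
      then show ?thesis using K kappa_ge1[of "A*B*Cc"] e by (intro mult_left_mono powr_mono2) auto
    qed
    finally show ?thesis .
  qed
  then have "real_of_int (N2^2) \<le> real_of_int g * (K * real_of_int (P * B) powr (1 + e))"
    using cC g0 unfolding c_def by (simp add: mult_left_mono)
  also have "\<dots> \<le> K * (real_of_int g powr (1+e) * real_of_int (P * B) powr (1 + e))"
  proof -
    have "real_of_int g = real_of_int g powr 1" using g0 by simp
    also have "\<dots> \<le> real_of_int g powr (1+e)" using g0 e by (intro powr_mono) auto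
    finally have "real_of_int g \<le> real_of_int g powr (1+e)" .
    then show ?thesis using K by (simp add: mult_right_mono mult.left_commute)
  qed
  also have "\<dots> = K * real_of_int (P * d^2) powr (1 + e)"
  proof -
    have "P * d^2 = g * (P * B)" using bB unfolding b_def by simp
    then show ?thesis using g0 P1 B0 by (simp add: powr_mult)
  qed
  finally show ?thesis unfolding P_def .
qed


lemma pw_aux: "(x::real) > 1 \<Longrightarrow> x powr 3 * (x powr 0.2)^4 = x powr (19/5)"
proof -
  assume x: "x > 1"
  have "(x powr 0.2)^4 = x powr (of_nat 4 * 0.2)" using x by (intro powr_power) auto
  also have "\<dots> = x powr 0.8" by simp
  finally have "x powr 3 * (x powr 0.2)^4 = x powr 3 * x powr 0.8" by simp
  also have "\<dots> = x powr (3 + 0.8)" by (rule powr_add[symmetric])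
  also have "(3 + 0.8::real) = 19/5" by simp
  finally show ?thesis .
qed
lemma final_real:
  fixes x y K Q n2 :: real
  assumes K: "K > 0" and x: "x > 1 + (8*K) powr 20"
    and Q1: "Q \<ge> 1" and Q2: "Q^2 \<le> 8 * x powr (19/5)"
    and n2: "x < n2" and key: "n2^2 \<le> K * Q powr (1 + 1/38)"
  shows False
proof -
  have x1: "x > 1" using x by (smt (verit) powr_ge_zero)
  have "(Q^2) powr (39/76) = (Q powr 2) powr (39/76)"
    using Q1 by (subst powr_numeral) auto
  also have "\<dots> = Q powr (2 * (39/76))" by (rule powr_powr)
  finally have "Q powr (1 + 1/38) = (Q^2) powr (39/76)" by simp
  also have "\<dots> \<le> (8 * x powr (19/5)) powr (39/76)"
    using Q2 Q1 by (intro powr_mono2) auto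
  also have "\<dots> = 8 powr (39/76) * x powr (39/20)"
    using x1 by (simp add: powr_mult powr_powr)
  also have "\<dots> \<le> 8 * x powr (39/20)"
  proof -
    have "(8::real) powr (39/76) \<le> 8 powr 1" by (intro powr_mono) auto
    then show ?thesis by (intro mult_right_mono) auto
  qed
  finally have b: "Q powr (1 + 1/38) \<le> 8 * x powr (39/20)" .
  have "x powr 2 < n2^2"
    using n2 x1 by (simp add: powr_realpow power_strict_mono)
  also have "\<dots> \<le> K * (8 * x powr (39/20))" using key b K
    by (smt (verit) mult_left_mono)
  finally have "x powr (1/20) * x powr (39/20) < (8*K) * x powr (39/20)"
    by (simp add: powr_add[symmetric])
  then have lt: "x powr (1/20) < 8*K" using x1 by simp
  have "((8*K) powr 20) powr (1/20) = (8*K) powr (20 * (1/20))" by (rule powr_powr)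
  then have "8*K = ((8*K) powr 20) powr (1/20)" using K by simp
  also have "\<dots> < x powr (1/20)" using x by (intro powr_less_mono2) auto
  finally show False using lt by simp
qed

theorem mainTheorem8:
  assumes "abc_conjecture"
  shows "\<exists>C::real. C > 0 \<and>
    (\<forall>x y :: real. x > C \<longrightarrow> 1 \<le> y \<longrightarrow> y \<le> x powr 0.2 \<longrightarrow>
      \<not> (\<exists>n1 n2 n3 :: nat. squarefull n1 \<and> squarefull n2 \<and> squarefull n3 \<and>
            n1 < n2 \<and> n2 < n3 \<and> x < real n1 \<and> real n3 \<le> x + y \<and> n1 + n3 = 2 * n2))"
proof -
  have "(1/38::real) > 0" by simp
  then obtain K :: real where K: "K > 0" and abc: "\<forall>a b c :: int. a + b = c \<longrightarrow> gcd a b = 1 \<longrightarrow>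
           real_of_int (max \<bar>a\<bar> (max \<bar>b\<bar> \<bar>c\<bar>)) \<le> K * (real_of_int (kappa (a*b*c))) powr (1 + 1/38)"
    using assms unfolding abc_conjecture_def by blast
  define C where "C = 1 + (8*K) powr 20"
  have C0: "C > 0" unfolding C_def by (smt (verit) powr_ge_zero)
  show ?thesis
  proof (intro exI conjI allI impI notI)
    show "C > 0" by (rule C0)
    fix x y :: real
    assume x: "x > C" and y1: "1 \<le> y" and y2: "y \<le> x powr 0.2"
    assume "\<exists>n1 n2 n3 :: nat. squarefull n1 \<and> squarefull n2 \<and> squarefull n3 \<and>
            n1 < n2 \<and> n2 < n3 \<and> x < real n1 \<and> real n3 \<le> x + y \<and> n1 + n3 = 2 * n2"
    then obtain n1 n2 n3 :: nat where s1: "squarefull n1" and s2: "squarefull n2" and s3: "squarefull n3"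
      and lt: "n1 < n2" "n2 < n3" and xn: "x < real n1" and ny: "real n3 \<le> x + y" and ap: "n1 + n3 = 2 * n2"
      by blast
    have x1: "x > 1" using x unfolding C_def by (smt (verit) powr_ge_zero)
    define d where "d = int n2 - int n1"
    have d0: "d > 0" using lt unfolding d_def by simp
    have N3: "int n3 = int n2 + d" using ap unfolding d_def by linarith
    have kk: "real_of_int ((int n2)^2) \<le> K * real_of_int (kappa (int n1) * kappa (int n2) * kappa (int n3) * d^2) powr (1 + 1/38)"
      by (rule key[OF abc _ K]) (use d0 N3 lt s1 in \<open>auto simp: d_def squarefull_def\<close>)
    define Q where "Q = real_of_int (kappa (int n1) * kappa (int n2) * kappa (int n3) * d^2)"
    have Q1: "Q \<ge> 1"
    proof -
      have "1 \<le> kappa (int n1) * kappa (int n2) * kappa (int n3) * d^2"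
        using kappa_ge1 ge1_mult d0 by (metis int_one_le_iff_zero_less zero_less_power)
      then show ?thesis unfolding Q_def by linarith
    qed
    have yx: "y \<le> x"
    proof -
      have "x powr 0.2 \<le> x powr 1" using x1 by (intro powr_mono) auto
      then show ?thesis using y2 x1 by simp
    qed
    have dy: "real_of_int d \<le> y" using xn ny lt unfolding d_def by linarith
    have kb: "real_of_int (kappa (int n) ^ 2) \<le> 2 * x" if "squarefull n" "real n \<le> x + y" for n
    proof -
      have "kappa (int n) ^ 2 \<le> int n" using squarefull_kappa[OF that(1)] .
      then have "real_of_int (kappa (int n) ^ 2) \<le> real n" by (metis of_int_le_iff of_int_of_nat_eq)
      then show ?thesis using that(2) yx by linarith
    qed
    have n2y: "real n2 \<le> x + y" and n1y: "real n1 \<le> x + y" using lt ny by auto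
    have Q2: "Q^2 \<le> 8 * x powr (19/5)"
    proof -
      have "Q^2 = real_of_int (kappa (int n1) ^ 2) * real_of_int (kappa (int n2) ^ 2) * real_of_int (kappa (int n3) ^ 2) * (real_of_int d)^4"
        unfolding Q_def by (simp add: power_mult_distrib power_mult[symmetric])
      also have "\<dots> \<le> (2*x) * (2*x) * (2*x) * y^4"
        using kb[OF s1 n1y] kb[OF s2 n2y] kb[OF s3 ny] dy d0 x1
        by (intro mult_mono power_mono) (auto simp: kappa_nonneg)
      also have "\<dots> = 8 * (x powr 3 * (y^4))" using x1 by (simp add: power3_eq_cube)
      also have "\<dots> \<le> 8 * (x powr 3 * (x powr 0.2)^4)" using y1 y2 x1 by (intro mult_left_mono power_mono) auto
      also have "\<dots> = 8 * x powr (19/5)"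
        using pw_aux[OF x1] by simp
      finally show ?thesis .
    qed
    have "real n2 ^ 2 \<le> K * Q powr (1 + 1/38)" using kk unfolding Q_def by simp
    moreover have "x < real n2" using xn lt by simp
    ultimately show False using final_real[OF K _ Q1 Q2] x unfolding C_def by blast
  qed
qed

end
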